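(* Let $S$ be a semigroup and let $a_1,a_2,\dotsc$ be a sequence in $S$. If the set $\mathrm{FS}(a_1,a_2,\dotsc)$ is infinite, then it is a proper IP set; in particular, every superset of such a set is a proper IP set.
   Context: Semigroups are written additively but are not assumed commutative. For a sequence $a_1,a_2,\dotsc$ in a semigroup, $\mathrm{FS}(a_1,a_2,\dotsc):=\{a_{i_1}+\dotsb+a_{i_m} : m\ge 1,\ i_1<\dotsb<i_m\}$, and for a natural number $n$, $\mathrm{FS}(a_1,\dotsc,a_n):=\{a_{i_1}+\dotsb+a_{i_m} : m\ge1,\ i_1<\dotsb<i_m\le n\}$. A subset of a semigroup is a proper IP set if it contains $\mathrm{FS}(b_1,b_2,\dotsc)$ for some bijective (i.e. injective) sequence $b_1,b_2,\dotsc$ in the semigroup. *)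

theory Defs
  imports Main
begin

fun nsum :: "('a::semigroup_add) list \<Rightarrow> 'a" where
  "nsum [] = undefined"
| "nsum [x] = x"
| "nsum (x # y # xs) = x + nsum (y # xs)"

text \<open>FS(a_1,a_2,...): all sums a_{i1} + ... + a_{im} with m \<ge> 1, i1 < ... < im,
  i.e. sums over finite nonempty index sets F, added in increasing index order.\<close>
definition FS :: "(nat \<Rightarrow> 'a::semigroup_add) \<Rightarrow> 'a set" where
  "FS a = {nsum (map a (sorted_list_of_set F)) | F. finite F \<and> F \<noteq> {}}"

definition proper_IP_set :: "('a::semigroup_add) set \<Rightarrow> bool" where
  "proper_IP_set A \<longleftrightarrow> (\<exists>b :: nat \<Rightarrow> 'a. inj b \<and> FS b \<subseteq> A)"

end

theory Submission
  imports Defs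
begin

definition val :: "(nat \<Rightarrow> 'a::semigroup_add) \<Rightarrow> nat set \<Rightarrow> 'a" where
  "val a F = nsum (map a (sorted_list_of_set F))"

lemma nsum_Cons: "ys \<noteq> [] \<Longrightarrow> nsum (x # ys) = x + nsum ys"
  by (cases ys) auto

lemma nsum_append: "xs \<noteq> [] \<Longrightarrow> ys \<noteq> [] \<Longrightarrow> nsum (xs @ ys) = nsum xs + nsum ys"
proof (induction xs)
  case Nil then show ?case by simp
next
  case (Cons x xs)
  show ?case
  proof (cases "xs = []")
    case True then show ?thesis using Cons by (simp add: nsum_Cons)
  next
    case False then show ?thesis using Cons by (simp add: nsum_Cons add.assoc)
  qed
qed

lemma sorted_union:
  assumes "finite A" "finite B" "\<forall>x\<in>A. \<forall>y\<in>B. x < y"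
  shows "sorted_list_of_set (A \<union> B) = sorted_list_of_set A @ sorted_list_of_set (B::nat set)"
proof -
  have "sorted (sorted_list_of_set A @ sorted_list_of_set B)"
    using assms by (auto simp: sorted_append less_imp_le)
  moreover have "distinct (sorted_list_of_set A @ sorted_list_of_set B)"
    using assms by auto
  moreover have "set (sorted_list_of_set A @ sorted_list_of_set B) = A \<union> B"
    using assms by auto
  ultimately show ?thesis using assms
    by (intro sorted_distinct_set_unique) auto
qed

lemma val_union:
  assumes "finite A" "finite B" "A \<noteq> {}" "B \<noteq> {}" "\<forall>x\<in>A. \<forall>y\<in>B. x < y"
  shows "val a (A \<union> B) = val a A + val a B"
  using assms by (simp add: val_def sorted_union nsum_append)

lemma tail_infinite:
  fixes a :: "nat \<Rightarrow> 'a::semigroup_add"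
  assumes "infinite (FS a)"
  shows "infinite {val a F | F. finite F \<and> F \<noteq> {} \<and> (\<forall>i\<in>F. m \<le> i)}"
proof
  define T where "T = {val a F | F. finite F \<and> F \<noteq> {} \<and> (\<forall>i\<in>F. m \<le> i)}"
  define P where "P = {val a G | G. G \<noteq> {} \<and> G \<subseteq> {..<m}}"
  assume "finite {val a F | F. finite F \<and> F \<noteq> {} \<and> (\<forall>i\<in>F. m \<le> i)}"
  hence fT: "finite T" by (simp add: T_def)
  have "P \<subseteq> val a ` Pow {..<m}" unfolding P_def by auto
  hence fP: "finite P" by (rule finite_subset) simp
  have "FS a \<subseteq> P \<union> T \<union> (\<lambda>(p,t). p + t) ` (P \<times> T)"
  proof
    fix x assume "x \<in> FS a"
    then obtain F where F: "finite F" "F \<noteq> {}" "x = val a F"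
      unfolding FS_def val_def by auto
    define G where "G = F \<inter> {..<m}"
    define H where "H = F - {..<m}"
    have FGH: "F = G \<union> H" unfolding G_def H_def by auto
    have fG: "finite G" "finite H" using F(1) unfolding G_def H_def by auto
    have lt: "\<forall>x\<in>G. \<forall>y\<in>H. x < y" unfolding G_def H_def by auto
    show "x \<in> P \<union> T \<union> (\<lambda>(p,t). p + t) ` (P \<times> T)"
    proof (cases "G = {}")
      case True
      hence "x \<in> T" using F FGH fG unfolding T_def H_def
        by (auto intro!: exI[of _ H] simp: H_def)
      thus ?thesis by auto
    next
      case Gne: False
      show ?thesis
      proof (cases "H = {}")
        case True
        hence "x \<in> P" using F FGH Gne unfolding P_def G_def by auto
        thus ?thesis by auto
      next
        case False
        have "x = val a G + val a H" using F FGH val_union[OF fG Gne False lt] by simp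
        moreover have "val a G \<in> P" using Gne unfolding P_def G_def by auto
        moreover have "val a H \<in> T" using fG False unfolding T_def H_def by auto
        ultimately show ?thesis by force
      qed
    qed
  qed
  moreover have "finite (P \<union> T \<union> (\<lambda>(p,t). p + t) ` (P \<times> T))" using fP fT by auto
  ultimately show False using assms finite_subset by blast
qed

definition spec :: "(nat \<Rightarrow> 'a::semigroup_add) \<Rightarrow> nat set list \<Rightarrow> nat set \<Rightarrow> bool" where
  "spec a L F \<longleftrightarrow> finite F \<and> F \<noteq> {} \<and> (\<forall>G\<in>set L. \<forall>i\<in>G. \<forall>j\<in>F. i < j) \<and> val a F \<notin> val a ` set L"

lemma spec_exists:
  fixes a :: "nat \<Rightarrow> 'a::semigroup_add"
  assumes "infinite (FS a)" "\<forall>G\<in>set L. finite G"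
  shows "\<exists>F. spec a L F"
proof -
  define m where "m = Suc (Max (insert 0 (\<Union>(set L))))"
  have fin: "finite (insert 0 (\<Union>(set L)))" using assms(2) by auto
  have mb: "\<forall>G\<in>set L. \<forall>i\<in>G. i < m"
    unfolding m_def using Max_ge[OF fin] by (meson UnionI insertCI le_imp_less_Suc)
  define T where "T = {val a F | F. finite F \<and> F \<noteq> {} \<and> (\<forall>i\<in>F. m \<le> i)}"
  have "infinite T" unfolding T_def by (rule tail_infinite[OF assms(1)])
  hence "T - val a ` set L \<noteq> {}"
    by (metis Diff_eq_empty_iff finite_imageI finite_set finite_subset)
  then obtain F where F: "finite F" "F \<noteq> {}" "\<forall>i\<in>F. m \<le> i" "val a F \<notin> val a ` set L"
    unfolding T_def by blast
  have "spec a L F" unfolding spec_def using F mb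
    by (meson less_le_trans)
  thus ?thesis by blast
qed

definition pick :: "(nat \<Rightarrow> 'a::semigroup_add) \<Rightarrow> nat set list \<Rightarrow> nat set" where
  "pick a L = (SOME F. spec a L F)"

primrec hist :: "(nat \<Rightarrow> 'a::semigroup_add) \<Rightarrow> nat \<Rightarrow> nat set list" where
  "hist a 0 = []"
| "hist a (Suc k) = hist a k @ [pick a (hist a k)]"

lemma hist_map: "hist a k = map (\<lambda>j. pick a (hist a j)) [0..<k]"
  by (induction k) auto

lemma hist_spec:
  fixes a :: "nat \<Rightarrow> 'a::semigroup_add"
  assumes "infinite (FS a)"
  shows "spec a (hist a k) (pick a (hist a k))"
proof (induction k rule: less_induct)
  case (less k)
  have "\<forall>G\<in>set (hist a k). finite G"
    using less unfolding hist_map[of a k] by (auto simp: spec_def)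
  from spec_exists[OF assms this] show ?case unfolding pick_def by (rule someI_ex)
qed

lemma thm_main:
  fixes a :: "nat \<Rightarrow> 'a::semigroup_add"
  assumes inf: "infinite (FS a)"
  shows "proper_IP_set (FS a)"
proof -
  define F where "F k = pick a (hist a k)" for k
  define b where "b k = val a (F k)" for k
  have sp: "spec a (map F [0..<k]) (F k)" for k
    using hist_spec[OF inf, of k] unfolding F_def hist_map[of a k] by simp
  have fin: "finite (F k)" "F k \<noteq> {}" for k using sp[of k] by (auto simp: spec_def)
  have lt: "\<forall>i\<in>F k. \<forall>j\<in>F l. i < j" if "k < l" for k l
    using sp[of l] that unfolding spec_def by auto
  have ne: "b k \<noteq> b l" if "k < l" for k l
  proof -
    have "val a (F k) \<in> val a ` set (map F [0..<l])" using that by auto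
    thus ?thesis using sp[of l] unfolding spec_def b_def by metis
  qed
  have inj: "inj b"
    by (rule injI) (metis ne linorder_neq_iff)
  have key: "sorted_wrt (<) ks \<Longrightarrow> ks \<noteq> [] \<Longrightarrow>
      nsum (map b ks) = val a (\<Union>k\<in>set ks. F k)" for ks
  proof (induction ks)
    case Nil then show ?case by simp
  next
    case (Cons k ks)
    show ?case
    proof (cases "ks = []")
      case True then show ?thesis by (simp add: b_def)
    next
      case False
      have "nsum (map b (k # ks)) = b k + val a (\<Union>j\<in>set ks. F j)"
        using Cons False by (simp add: nsum_Cons)
      also have "\<dots> = val a (F k \<union> (\<Union>j\<in>set ks. F j))"
        unfolding b_def
        apply (rule val_union[symmetric])
        using fin False Cons.prems lt by (auto simp: ex_in_conv[symmetric] neq_Nil_conv)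
      finally show ?thesis by simp
    qed
  qed
  have "FS b \<subseteq> FS a"
  proof
    fix x assume "x \<in> FS b"
    then obtain H where H: "finite H" "H \<noteq> {}" "x = nsum (map b (sorted_list_of_set H))"
      unfolding FS_def by auto
    have "x = val a (\<Union>k\<in>H. F k)"
      using H key[of "sorted_list_of_set H"] by simp
    moreover have "finite (\<Union>k\<in>H. F k)" "(\<Union>k\<in>H. F k) \<noteq> {}" using H fin by auto
    ultimately show "x \<in> FS a" unfolding FS_def val_def by blast
  qed
  thus ?thesis unfolding proper_IP_set_def using inj by blast
qed

theorem lemma1p3:
  fixes a :: "nat \<Rightarrow> 'a::semigroup_add"
  assumes "infinite (FS a)"
  shows "proper_IP_set (FS a) \<and> (\<forall>B. FS a \<subseteq> B \<longrightarrow> proper_IP_set B)"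
  using thm_main[OF assms] unfolding proper_IP_set_def by blast

end
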